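(* Let $D$ be a finite directed graph that is essentially a tree. Then $\Delta(D)$ is vertex decomposable, and hence shellable (in the nonpure sense).
   Context: For a finite directed graph $D$ (no loops, no multiple edges), the complex of directed trees $\Delta(D)$ has the directed edges of $D$ as vertices, and its faces are the edge sets of directed forests in $D$ (vertex-disjoint unions of rooted directed trees; equivalently, edge sets in which every vertex has in-degree at most $1$ and there is no directed cycle). $D$ is essentially a tree if the undirected graph obtained by replacing every directed edge, or pair of oppositely directed edges between the same two vertices, by a single undirected edge is a tree. A simplicial complex $\Delta$ is vertex decomposable if it is a simplex, or there is a vertex $v$ (a shedding vertex) such that $\Delta\setminus v$ (faces not containing $v$) and $\mathrm{link}_\Delta v$ are vertex decomposable and no facet of $\mathrm{link}_\Delta v$ is a facet of $\Delta\setminus v$. A (possibly nonpure) complex is shellable if its facets admit a linear order $F_1,\ldots,F_k$ such that for all $i<j$ there exist $l<j$ and a vertex $v\in F_j$ with $F_i\cap F_j\subseteq F_l\cap F_j=F_j\setminus\{v\}$. *)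

theory Defs
  imports Main
begin

text \<open>A finite directed graph: finite vertex set V, edge set E of ordered pairs
  inside V, no loops (multiple edges are excluded automatically by using a set).\<close>
definition digraph :: "'v set \<Rightarrow> ('v \<times> 'v) set \<Rightarrow> bool" where
  "digraph V E \<longleftrightarrow> finite V \<and> E \<subseteq> V \<times> V \<and> (\<forall>(u, w) \<in> E. u \<noteq> w)"

definition directed_forest :: "('v \<times> 'v) set \<Rightarrow> bool" where
  "directed_forest S \<longleftrightarrow>
     (\<forall>(a, b) \<in> S. \<forall>(c, d) \<in> S. b = d \<longrightarrow> a = c) \<and> acyclic S"

definition tree_complex :: "('v \<times> 'v) set \<Rightarrow> ('v \<times> 'v) set set" where
  "tree_complex E = {S. S \<subseteq> E \<and> directed_forest S}"

text \<open>Underlying undirected edges: each directed edge (or antiparallel pair) becomes one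
  undirected edge.\<close>
definition underlying_edges :: "('v \<times> 'v) set \<Rightarrow> 'v set set" where
  "underlying_edges E = {{u, w} | u w. (u, w) \<in> E}"

definition ug_connected :: "'v set \<Rightarrow> ('v \<times> 'v) set \<Rightarrow> bool" where
  "ug_connected V E \<longleftrightarrow> (\<forall>u \<in> V. \<forall>w \<in> V. (u, w) \<in> (E \<union> E\<inverse>)\<^sup>*)"

definition ug_has_cycle :: "'v set \<Rightarrow> ('v \<times> 'v) set \<Rightarrow> bool" where
  "ug_has_cycle V E \<longleftrightarrow> (\<exists>cs. length cs \<ge> 3 \<and> distinct cs \<and> set cs \<subseteq> V \<and>
      (\<forall>i < length cs. {cs ! i, cs ! ((i + 1) mod length cs)} \<in> underlying_edges E))"

definition essentially_tree :: "'v set \<Rightarrow> ('v \<times> 'v) set \<Rightarrow> bool" where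
  "essentially_tree V E \<longleftrightarrow> V \<noteq> {} \<and> ug_connected V E \<and> \<not> ug_has_cycle V E"

definition deletion :: "'a set set \<Rightarrow> 'a \<Rightarrow> 'a set set" where
  "deletion K v = {F \<in> K. v \<notin> F}"

definition link :: "'a set set \<Rightarrow> 'a \<Rightarrow> 'a set set" where
  "link K v = {F \<in> K. v \<notin> F \<and> insert v F \<in> K}"

definition facets :: "'a set set \<Rightarrow> 'a set set" where
  "facets K = {F \<in> K. \<forall>G \<in> K. F \<subseteq> G \<longrightarrow> G = F}"

definition is_simplex :: "'a set set \<Rightarrow> bool" where
  "is_simplex K \<longleftrightarrow> (\<exists>F. finite F \<and> K = Pow F)"

inductive vertex_decomposable :: "'a set set \<Rightarrow> bool" where
  simplex: "is_simplex K \<Longrightarrow> vertex_decomposable K"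
| shed: "v \<in> \<Union>K \<Longrightarrow> vertex_decomposable (deletion K v) \<Longrightarrow>
         vertex_decomposable (link K v) \<Longrightarrow>
         facets (link K v) \<inter> facets (deletion K v) = {} \<Longrightarrow> vertex_decomposable K"

definition shellable :: "'a set set \<Rightarrow> bool" where
  "shellable K \<longleftrightarrow> (\<exists>fs. distinct fs \<and> set fs = facets K \<and>
     (\<forall>j < length fs. \<forall>i < j. \<exists>l < j. \<exists>v \<in> fs ! j.
        fs ! i \<inter> fs ! j \<subseteq> fs ! l \<inter> fs ! j \<and> fs ! l \<inter> fs ! j = fs ! j - {v}))"

end

theory Submission
  imports Defs
begin

section \<open>Walks and cycles\<close>

lemma walk_cycle:
  assumes fin: "finite V" and inV: "\<And>n. a n \<in> V"
    and adj: "\<And>n. (a n, a (Suc n)) \<in> E \<or> (a (Suc n), a n) \<in> E"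
    and nl: "\<And>n. a (Suc n) \<noteq> a n" and nb: "\<And>n. a (Suc (Suc n)) \<noteq> a n"
  shows "ug_has_cycle V E"
proof -
  have "\<not> inj_on a {..card V}"
  proof
    assume "inj_on a {..card V}"
    then have "card (a ` {..card V}) = card {..card V}" by (rule card_image)
    moreover have "card (a ` {..card V}) \<le> card V" using inV by (intro card_mono fin) auto
    ultimately show False by simp
  qed
  then obtain i j where ij: "i \<noteq> j" "a i = a j" unfolding inj_on_def by blast
  define P where "P j \<longleftrightarrow> (\<exists>i<j. a i = a j)" for j
  have Pj: "\<exists>j. P j"
  proof (cases "i < j")
    case True then show ?thesis using ij unfolding P_def by blast
  next
    case False then have "j < i" using ij by simp
    then show ?thesis using ij unfolding P_def by metis
  qed
  define m where "m = (LEAST j. P j)"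
  have Pm: "P m" using Pj LeastI_ex m_def by metis
  have minm: "\<And>k. P k \<Longrightarrow> m \<le> k" using Least_le m_def by metis
  obtain i0 where i0: "i0 < m" "a i0 = a m" using Pm P_def by auto
  define cs where "cs = map a [i0..<m]"
  have len: "length cs = m - i0" by (simp add: cs_def)
  have nth: "\<And>k. k < m - i0 \<Longrightarrow> cs ! k = a (i0 + k)" by (simp add: cs_def)
  have dist: "distinct cs"
    unfolding distinct_conv_nth len
  proof (intro allI impI)
    fix p q assume pq: "p < m - i0" "q < m - i0" "p \<noteq> q"
    show "cs ! p \<noteq> cs ! q"
    proof
      assume eq: "cs ! p = cs ! q"
      then have e: "a (i0 + p) = a (i0 + q)" using pq nth by simp
      show False
      proof (cases "p < q")
        case True
        then have "P (i0 + q)" unfolding P_def using e by (intro exI[of _ "i0+p"]) simp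
        then show False using minm[of "i0+q"] pq by simp
      next
        case False
        then have "q < p" using pq by simp
        then have "P (i0 + p)" unfolding P_def using e by (intro exI[of _ "i0+q"]) simp
        then show False using minm[of "i0+p"] pq by simp
      qed
    qed
  qed
  have ge3: "m - i0 \<ge> 3"
  proof (rule ccontr)
    assume "\<not> 3 \<le> m - i0"
    then have "m = Suc i0 \<or> m = Suc (Suc i0)" using i0 by linarith
    then show False using nl[of i0] nb[of i0] i0 by auto
  qed
  have edge: "{a n, a (Suc n)} \<in> underlying_edges E" for n
    using adj[of n] unfolding underlying_edges_def by (auto simp: insert_commute)
  show ?thesis unfolding ug_has_cycle_def
  proof (intro exI[of _ cs] conjI allI impI)
    show "3 \<le> length cs" using len ge3 by simp
    show "distinct cs" by (rule dist)
    show "set cs \<subseteq> V" using inV by (auto simp: cs_def)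
    fix k assume k: "k < length cs"
    have "cs ! ((k + 1) mod length cs) = a (Suc (i0 + k))"
    proof (cases "k + 1 < length cs")
      case True then show ?thesis using nth len by simp
    next
      case False
      then have "k + 1 = length cs" using k by simp
      then have "(k+1) mod length cs = 0" by simp
      have "Suc (i0 + k) = m" using \<open>k + 1 = length cs\<close> len i0 by simp
      then show ?thesis using nth[of 0] len ge3 i0 \<open>(k+1) mod length cs = 0\<close> by simp
    qed
    then show "{cs ! k, cs ! ((k + 1) mod length cs)} \<in> underlying_edges E"
      using nth[of k] k len edge[of "i0+k"] by simp
  qed
qed

lemma walk2:
  assumes dg: "digraph V E"
    and Qe: "\<And>a b. Q a b \<Longrightarrow> (a, b) \<in> E \<or> (b, a) \<in> E"
    and step: "\<And>a b. Q a b \<Longrightarrow> \<exists>c. c \<noteq> a \<and> Q b c"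
    and start: "Q a0 b0"
  shows "ug_has_cycle V E"
proof -
  have finV: "finite V" and EV: "E \<subseteq> V \<times> V" and nlp: "\<And>u w. (u, w) \<in> E \<Longrightarrow> u \<noteq> w"
    using dg unfolding digraph_def by auto
  define g where "g = (\<lambda>(a::'a, b::'a). (b, SOME c. c \<noteq> a \<and> Q b c))"
  define s where "s n = (g ^^ n) (a0, b0)" for n
  have sS: "s (Suc n) = g (s n)" for n by (simp add: s_def)
  have gS: "\<And>a b. Q a b \<Longrightarrow> fst (g (a, b)) = b \<and> snd (g (a, b)) \<noteq> a \<and> Q b (snd (g (a, b)))"
  proof -
    fix a b assume "Q a b"
    then have "\<exists>c. c \<noteq> a \<and> Q b c" by (rule step)
    then have "(SOME c. c \<noteq> a \<and> Q b c) \<noteq> a \<and> Q b (SOME c. c \<noteq> a \<and> Q b c)" by (rule someI_ex)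
    then show "fst (g (a, b)) = b \<and> snd (g (a, b)) \<noteq> a \<and> Q b (snd (g (a, b)))"
      by (simp add: g_def)
  qed
  have Qs: "Q (fst (s n)) (snd (s n))" for n
  proof (induction n)
    case 0 then show ?case using start by (simp add: s_def)
  next
    case (Suc n)
    obtain a b where ab: "s n = (a, b)" by (cases "s n")
    show ?case using Suc gS[of a b] ab sS[of n] by simp
  qed
  have fS: "fst (s (Suc n)) = snd (s n)" and sNe: "snd (s (Suc n)) \<noteq> fst (s n)" for n
  proof -
    obtain a b where ab: "s n = (a, b)" by (cases "s n")
    show "fst (s (Suc n)) = snd (s n)" "snd (s (Suc n)) \<noteq> fst (s n)"
      using Qs[of n] gS[of a b] ab sS[of n] by simp_all
  qed
  define v where "v n = fst (s n)" for n
  have adj: "(v n, v (Suc n)) \<in> E \<or> (v (Suc n), v n) \<in> E" for n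
    using Qe[OF Qs[of n]] fS[of n] by (simp add: v_def)
  show ?thesis
  proof (rule walk_cycle[OF finV, of v])
    fix n show "v n \<in> V" using adj[of n] EV by auto
    show "(v n, v (Suc n)) \<in> E \<or> (v (Suc n), v n) \<in> E" by (rule adj)
    show "v (Suc n) \<noteq> v n" using adj[of n] nlp[of "v n" "v n"] nlp[of "v (Suc n)" "v (Suc n)"] by auto
    show "v (Suc (Suc n)) \<noteq> v n" using sNe[of n] fS[of "Suc n"] by (simp add: v_def)
  qed
qed

section \<open>Conflict graph\<close>

definition conf :: "('v \<times> 'v) \<Rightarrow> ('v \<times> 'v) \<Rightarrow> bool" where
  "conf e f \<longleftrightarrow> e \<noteq> f \<and> (snd e = snd f \<or> (fst e = snd f \<and> snd e = fst f))"

definition Ind :: "('v \<times> 'v) set \<Rightarrow> ('v \<times> 'v) set set" where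
  "Ind X = {S. S \<subseteq> X \<and> (\<forall>e\<in>S. \<forall>f\<in>S. \<not> conf e f)}"

lemma conf_sym: "conf e f \<Longrightarrow> conf f e"
  unfolding conf_def by auto

lemma conf_irrefl: "\<not> conf e e"
  unfolding conf_def by auto

lemma acyc:
  assumes dg: "digraph V E" and nc: "\<not> ug_has_cycle V E" and SE: "S \<subseteq> E"
    and na: "\<And>a b. (a, b) \<in> S \<Longrightarrow> (b, a) \<notin> S"
  shows "acyclic S"
  unfolding acyclic_def
proof (intro allI notI)
  fix x assume x: "(x, x) \<in> S\<^sup>+"
  define Y where "Y = {y. (y, y) \<in> S\<^sup>+}"
  have pred: "\<And>y. y \<in> Y \<Longrightarrow> \<exists>z. (z, y) \<in> S \<and> z \<in> Y"
  proof -
    fix y assume "y \<in> Y"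
    then have "(y, y) \<in> S\<^sup>+" by (simp add: Y_def)
    then obtain z where "(y, z) \<in> S\<^sup>*" "(z, y) \<in> S" using tranclD2 by metis
    then have "(z, z) \<in> S\<^sup>+" using rtrancl_into_trancl2 by metis
    then show "\<exists>z. (z, y) \<in> S \<and> z \<in> Y" using \<open>(z, y) \<in> S\<close> by (auto simp: Y_def)
  qed
  define Q where "Q a b \<longleftrightarrow> (b, a) \<in> S \<and> b \<in> Y" for a b
  obtain z where z: "(z, x) \<in> S" "z \<in> Y" using pred[of x] x by (auto simp: Y_def)
  have "ug_has_cycle V E"
  proof (rule walk2[OF dg, of Q x z])
    fix a b assume "Q a b" then show "(a, b) \<in> E \<or> (b, a) \<in> E" using SE by (auto simp: Q_def)
  next
    fix a b assume q: "Q a b"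
    then obtain c where c: "(c, b) \<in> S" "c \<in> Y" using pred by (auto simp: Q_def)
    have "c \<noteq> a" using c q na by (auto simp: Q_def)
    then show "\<exists>c. c \<noteq> a \<and> Q b c" using c by (auto simp: Q_def)
  next
    show "Q x z" using z by (simp add: Q_def)
  qed
  then show False using nc by simp
qed

lemma tc_Ind:
  assumes dg: "digraph V E" and nc: "\<not> ug_has_cycle V E"
  shows "tree_complex E = Ind E"
proof
  show "tree_complex E \<subseteq> Ind E"
  proof
    fix S assume "S \<in> tree_complex E"
    then have SE: "S \<subseteq> E" and indeg: "\<forall>(a, b) \<in> S. \<forall>(c, d) \<in> S. b = d \<longrightarrow> a = c"
      and ac: "acyclic S" unfolding tree_complex_def directed_forest_def by auto
    have "\<not> conf e f" if "e \<in> S" "f \<in> S" for e f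
    proof
      assume cf: "conf e f"
      obtain a b c d where e: "e = (a, b)" and f: "f = (c, d)" by (cases e, cases f)
      show False
      proof (cases "b = d")
        case True
        then have "a = c" using indeg that e f by blast
        then show False using cf e f True by (simp add: conf_def)
      next
        case False
        then have "f = (b, a)" using cf e f by (simp add: conf_def)
        then have "(a, a) \<in> S\<^sup>+" using that e
          by (meson trancl.r_into_trancl trancl_into_trancl)
        then show False using ac by (simp add: acyclic_def)
      qed
    qed
    then show "S \<in> Ind E" using SE by (auto simp: Ind_def)
  qed
next
  show "Ind E \<subseteq> tree_complex E"
  proof
    fix S assume "S \<in> Ind E"
    then have SE: "S \<subseteq> E" and ind: "\<And>e f. e \<in> S \<Longrightarrow> f \<in> S \<Longrightarrow> \<not> conf e f"
      by (auto simp: Ind_def)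
    have nlp: "\<And>u w. (u, w) \<in> E \<Longrightarrow> u \<noteq> w" using dg unfolding digraph_def by auto
    have indeg: "\<forall>(a, b) \<in> S. \<forall>(c, d) \<in> S. b = d \<longrightarrow> a = c"
    proof (clarify)
      fix a b c assume "(a, b) \<in> S" "(c, b) \<in> S"
      then show "a = c" using ind[of "(a,b)" "(c,b)"] by (auto simp: conf_def)
    qed
    have na: "\<And>a b. (a, b) \<in> S \<Longrightarrow> (b, a) \<notin> S"
    proof
      fix a b assume ab: "(a, b) \<in> S" "(b, a) \<in> S"
      have "a \<noteq> b" using ab SE nlp by auto
      then show False using ind[OF ab] by (auto simp: conf_def)
    qed
    have "acyclic S" by (rule acyc[OF dg nc SE na])
    then show "S \<in> tree_complex E" using SE indeg
      by (simp add: tree_complex_def directed_forest_def)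
  qed
qed

lemma key:
  assumes dg: "digraph V E" and nc: "\<not> ug_has_cycle V E" and XE: "X \<subseteq> E"
    and ef: "e \<in> X" "f \<in> X" "conf e f"
  shows "\<exists>w\<in>X. \<exists>x\<in>X. conf w x \<and> (\<forall>y\<in>X. conf y w \<longrightarrow> y = x \<or> conf y x)"
proof (rule ccontr)
  assume H: "\<not> ?thesis"
  have nlp: "\<And>u w. (u, w) \<in> E \<Longrightarrow> u \<noteq> w" using dg unfolding digraph_def by auto
  have A: "(b, a) \<in> X" if ab: "(a, b) \<in> X" "(c, b) \<in> X" "c \<noteq> a" for a b c
  proof (rule ccontr)
    assume nba: "(b, a) \<notin> X"
    have "conf (a, b) (c, b)" using ab by (simp add: conf_def)
    moreover have "\<forall>y\<in>X. conf y (a, b) \<longrightarrow> y = (c, b) \<or> conf y (c, b)"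
    proof (intro ballI impI)
      fix y assume y: "y \<in> X" "conf y (a, b)"
      obtain p q where yp: "y = (p, q)" by (cases y)
      show "y = (c, b) \<or> conf y (c, b)"
      proof (cases "q = b")
        case True then show ?thesis using yp by (auto simp: conf_def)
      next
        case False then have "y = (b, a)" using y yp by (auto simp: conf_def)
        then show ?thesis using y nba by simp
      qed
    qed
    ultimately show False using H ab by blast
  qed
  have B: "\<exists>c. c \<noteq> a \<and> (c, b) \<in> X" if ab: "(a, b) \<in> X" "(b, a) \<in> X" for a b
  proof (rule ccontr)
    assume nc': "\<not> (\<exists>c. c \<noteq> a \<and> (c, b) \<in> X)"
    have "a \<noteq> b" using ab XE nlp by auto
    then have "conf (a, b) (b, a)" by (simp add: conf_def)
    moreover have "\<forall>y\<in>X. conf y (a, b) \<longrightarrow> y = (b, a) \<or> conf y (b, a)"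
    proof (intro ballI impI)
      fix y assume y: "y \<in> X" "conf y (a, b)"
      obtain p q where yp: "y = (p, q)" by (cases y)
      show "y = (b, a) \<or> conf y (b, a)"
      proof (cases "q = b")
        case True then have "p \<noteq> a" using y yp by (auto simp: conf_def)
        then show ?thesis using nc' y yp True by auto
      next
        case False then have "y = (b, a)" using y yp by (auto simp: conf_def)
        then show ?thesis by simp
      qed
    qed
    ultimately show False using H ab by blast
  qed
  define Q where "Q a b \<longleftrightarrow> (a, b) \<in> X \<and> (b, a) \<in> X" for a b
  obtain a b where start: "Q a b"
  proof -
    obtain a b c d where e: "e = (a, b)" and f: "f = (c, d)" by (cases e, cases f)
    show ?thesis
    proof (cases "b = d")
      case True
      then have "c \<noteq> a" using ef e f by (auto simp: conf_def)
      then have "(b, a) \<in> X" using A[of a b c] ef e f True by simp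
      then show ?thesis using that[of a b] ef e by (simp add: Q_def)
    next
      case False
      then have "f = (b, a)" using ef e f by (auto simp: conf_def)
      then show ?thesis using that[of a b] ef e by (simp add: Q_def)
    qed
  qed
  have "ug_has_cycle V E"
  proof (rule walk2[OF dg, of Q a b])
    fix a b assume "Q a b" then show "(a, b) \<in> E \<or> (b, a) \<in> E" using XE by (auto simp: Q_def)
  next
    fix a b assume q: "Q a b"
    then obtain c where c: "c \<noteq> a" "(c, b) \<in> X" using B by (auto simp: Q_def)
    then have "(b, c) \<in> X" using A[of c b a] q by (auto simp: Q_def)
    then show "\<exists>c. c \<noteq> a \<and> Q b c" using c by (auto simp: Q_def)
  next
    show "Q a b" by (rule start)
  qed
  then show False using nc by simp
qed

lemma VD_Ind:
  assumes dg: "digraph V E" and nc: "\<not> ug_has_cycle V E"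
  shows "finite X \<Longrightarrow> X \<subseteq> E \<Longrightarrow> vertex_decomposable (Ind X)"
proof (induction "card X" arbitrary: X rule: less_induct)
  case less
  show ?case
  proof (cases "\<exists>e\<in>X. \<exists>f\<in>X. conf e f")
    case False
    then have "Ind X = Pow X" by (auto simp: Ind_def)
    then show ?thesis using less.prems by (auto intro!: vertex_decomposable.simplex simp: is_simplex_def)
  next
    case True
    then obtain e f where ef: "e \<in> X" "f \<in> X" "conf e f" by blast
    obtain w x where wx: "w \<in> X" "x \<in> X" "conf w x"
      and simp: "\<forall>y\<in>X. conf y w \<longrightarrow> y = x \<or> conf y x"
      using key[OF dg nc less.prems(2) ef] by blast
    define N where "N = {y. y = x \<or> conf x y}"
    have del: "deletion (Ind X) x = Ind (X - {x})"
      by (auto simp: deletion_def Ind_def)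
    have lnk: "link (Ind X) x = Ind (X - N)"
      using wx(2) by (auto simp: link_def Ind_def N_def conf_irrefl dest: conf_sym)
    have c1: "card (X - {x}) < card X" by (rule card_Diff1_less[OF less.prems(1) wx(2)])
    have c2: "card (X - N) < card X" using wx(2) less.prems(1)
      by (intro psubset_card_mono) (auto simp: N_def)
    have v1: "vertex_decomposable (deletion (Ind X) x)"
      unfolding del using less.hyps[OF c1] less.prems by auto
    have v2: "vertex_decomposable (link (Ind X) x)"
      unfolding lnk using less.hyps[OF c2] less.prems by auto
    have xin: "x \<in> \<Union>(Ind X)"
      using wx(2) by (auto simp: Ind_def conf_irrefl intro!: exI[of _ "{x}"])
    have fc: "facets (link (Ind X) x) \<inter> facets (deletion (Ind X) x) = {}"
    proof (rule ccontr)
      assume "facets (link (Ind X) x) \<inter> facets (deletion (Ind X) x) \<noteq> {}"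
      then obtain S where S1: "S \<in> Ind (X - N)" and S2: "S \<in> facets (Ind (X - {x}))"
        unfolding lnk del facets_def by blast
      have wN: "w \<in> N" using wx by (auto simp: N_def dest: conf_sym)
      have wS: "w \<notin> S" using S1 wN by (auto simp: Ind_def)
      have wx': "w \<noteq> x" using wx conf_irrefl by metis
      have "insert w S \<in> Ind (X - {x})"
      proof -
        have "\<not> conf s w" if "s \<in> S" for s
        proof
          assume "conf s w"
          then have "s = x \<or> conf s x" using simp S1 that by (auto simp: Ind_def)
          then have "s \<in> N" by (auto simp: N_def dest: conf_sym)
          then show False using S1 that by (auto simp: Ind_def)
        qed
        then show ?thesis using S1 wx wx' by (auto simp: Ind_def conf_irrefl dest: conf_sym)
      qed
      then have "insert w S = S" using S2 unfolding facets_def by blast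
      then show False using wS by blast
    qed
    show ?thesis by (rule vertex_decomposable.shed[OF xin v1 v2 fc])
  qed
qed

section \<open>Vertex decomposable implies shellable\<close>

definition dclosed :: "'a set set \<Rightarrow> bool" where
  "dclosed K \<longleftrightarrow> (\<forall>F\<in>K. \<forall>G. G \<subseteq> F \<longrightarrow> G \<in> K)"

lemma facets_decomp:
  assumes dc: "dclosed K" and fc: "facets (link K v) \<inter> facets (deletion K v) = {}"
  shows "facets K = facets (deletion K v) \<union> insert v ` facets (link K v)"
proof
  show "facets K \<subseteq> facets (deletion K v) \<union> insert v ` facets (link K v)"
  proof
    fix H assume H: "H \<in> facets K"
    show "H \<in> facets (deletion K v) \<union> insert v ` facets (link K v)"
    proof (cases "v \<in> H")
      case False
      then have "H \<in> facets (deletion K v)" using H by (auto simp: facets_def deletion_def)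
      then show ?thesis by simp
    next
      case True
      have HK: "H \<in> K" using H by (simp add: facets_def)
      have "H - {v} \<in> K" using dc HK by (auto simp: dclosed_def)
      then have L: "H - {v} \<in> link K v" using True HK by (auto simp: link_def insert_absorb)
      have "H - {v} \<in> facets (link K v)"
        unfolding facets_def
      proof (intro CollectI conjI ballI impI L)
        fix G assume G: "G \<in> link K v" "H - {v} \<subseteq> G"
        then have "insert v G \<in> K" "v \<notin> G" by (auto simp: link_def)
        moreover have "H \<subseteq> insert v G" using G by auto
        ultimately have "insert v G = H" using H by (auto simp: facets_def)
        then show "G = H - {v}" using \<open>v \<notin> G\<close> by auto
      qed
      moreover have "H = insert v (H - {v})" using True by auto
      ultimately show ?thesis by blast
    qed
  qed
next
  show "facets (deletion K v) \<union> insert v ` facets (link K v) \<subseteq> facets K"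
  proof
    fix H assume "H \<in> facets (deletion K v) \<union> insert v ` facets (link K v)"
    then show "H \<in> facets K"
    proof
      assume F: "H \<in> facets (deletion K v)"
      then have HK: "H \<in> K" and vH: "v \<notin> H" by (auto simp: facets_def deletion_def)
      show "H \<in> facets K"
        unfolding facets_def
      proof (intro CollectI conjI ballI impI HK)
        fix G assume G: "G \<in> K" "H \<subseteq> G"
        show "G = H"
        proof (cases "v \<in> G")
          case False
          then show ?thesis using F G by (auto simp: facets_def deletion_def)
        next
          case True
          have "G - {v} \<in> K" using dc G by (auto simp: dclosed_def)
          then have "G - {v} = H" using F G vH by (auto simp: facets_def deletion_def)
          then have "insert v H \<in> K" using G True by (auto simp: insert_absorb)
          then have Hl: "H \<in> link K v" using HK vH by (auto simp: link_def)
          have "H \<in> facets (link K v)"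
            using F Hl by (auto simp: facets_def deletion_def link_def)
          then show ?thesis using F fc by blast
        qed
      qed
    next
      assume "H \<in> insert v ` facets (link K v)"
      then obtain G where G: "G \<in> facets (link K v)" and HG: "H = insert v G" by blast
      then have HK: "H \<in> K" and vG: "v \<notin> G" by (auto simp: facets_def link_def)
      show "H \<in> facets K"
        unfolding facets_def
      proof (intro CollectI conjI ballI impI HK)
        fix H' assume H': "H' \<in> K" "H \<subseteq> H'"
        then have vH': "v \<in> H'" using HG by auto
        have "H' - {v} \<in> K" using dc H' by (auto simp: dclosed_def)
        then have "H' - {v} \<in> link K v" using H' vH' by (auto simp: link_def insert_absorb)
        moreover have "G \<subseteq> H' - {v}" using H' HG vG by auto
        ultimately have "H' - {v} = G" using G by (auto simp: facets_def)
        then show "H' = H" using HG vH' by auto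
      qed
    qed
  qed
qed

lemma exists_facet:
  assumes "finite K" "F \<in> K" shows "\<exists>G\<in>facets K. F \<subseteq> G"
proof -
  obtain m where m: "m \<in> {G\<in>K. F \<subseteq> G}" "\<forall>b\<in>{G\<in>K. F \<subseteq> G}. m \<subseteq> b \<longrightarrow> m = b"
    using finite_has_maximal[of "{G\<in>K. F \<subseteq> G}"] assms by auto
  then have "m \<in> facets K" by (auto simp: facets_def)
  then show ?thesis using m by auto
qed

definition cnd :: "'a set list \<Rightarrow> 'a set \<Rightarrow> bool" where
  "cnd P F \<longleftrightarrow> (\<forall>A\<in>set P. \<exists>B\<in>set P. \<exists>u\<in>F. A \<inter> F \<subseteq> B \<inter> F \<and> B \<inter> F = F - {u})"

lemma shell_iff:
  "(\<forall>j < length fs. \<forall>i < j. \<exists>l < j. \<exists>v \<in> fs ! j.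
        fs ! i \<inter> fs ! j \<subseteq> fs ! l \<inter> fs ! j \<and> fs ! l \<inter> fs ! j = fs ! j - {v})
   \<longleftrightarrow> (\<forall>j < length fs. cnd (take j fs) (fs ! j))"
proof -
  have s: "set (take j fs) = {fs ! i | i. i < j}" if "j < length fs" for j
  proof
    show "set (take j fs) \<subseteq> {fs ! i | i. i < j}"
    proof
      fix x assume "x \<in> set (take j fs)"
      then obtain i where "i < length (take j fs)" "take j fs ! i = x" by (auto simp: in_set_conv_nth)
      then show "x \<in> {fs ! i | i. i < j}" by auto
    qed
    show "{fs ! i | i. i < j} \<subseteq> set (take j fs)"
    proof
      fix x assume "x \<in> {fs ! i | i. i < j}"
      then obtain i where i: "i < j" "x = fs ! i" by blast
      then have "take j fs ! i = x" "i < length (take j fs)" using that by auto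
      then show "x \<in> set (take j fs)" by (metis nth_mem)
    qed
  qed
  show ?thesis
  proof
    assume L: "\<forall>j < length fs. \<forall>i < j. \<exists>l < j. \<exists>v \<in> fs ! j.
        fs ! i \<inter> fs ! j \<subseteq> fs ! l \<inter> fs ! j \<and> fs ! l \<inter> fs ! j = fs ! j - {v}"
    show "\<forall>j < length fs. cnd (take j fs) (fs ! j)"
    proof (intro allI impI)
      fix j assume j: "j < length fs"
      show "cnd (take j fs) (fs ! j)" unfolding cnd_def s[OF j]
      proof (intro ballI)
        fix A assume "A \<in> {fs ! i | i. i < j}"
        then obtain i where i: "i < j" "A = fs ! i" by blast
        then obtain l v where lv: "l < j" "v \<in> fs ! j"
          "fs ! i \<inter> fs ! j \<subseteq> fs ! l \<inter> fs ! j" "fs ! l \<inter> fs ! j = fs ! j - {v}"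
          using L j by blast
        have "fs ! l \<in> {fs ! i | i. i < j}" using lv(1) by blast
        then show "\<exists>B\<in>{fs ! i | i. i < j}. \<exists>u\<in>fs ! j. A \<inter> fs ! j \<subseteq> B \<inter> fs ! j \<and> B \<inter> fs ! j = fs ! j - {u}"
          using i lv by blast
      qed
    qed
  next
    assume R: "\<forall>j < length fs. cnd (take j fs) (fs ! j)"
    show "\<forall>j < length fs. \<forall>i < j. \<exists>l < j. \<exists>v \<in> fs ! j.
        fs ! i \<inter> fs ! j \<subseteq> fs ! l \<inter> fs ! j \<and> fs ! l \<inter> fs ! j = fs ! j - {v}"
    proof (intro allI impI)
      fix j i assume j: "j < length fs" and i: "i < j"
      have "cnd (take j fs) (fs ! j)" using R j by blast
      then have C: "\<forall>A\<in>{fs ! i | i. i < j}. \<exists>B\<in>{fs ! i | i. i < j}. \<exists>u\<in>fs ! j.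
          A \<inter> fs ! j \<subseteq> B \<inter> fs ! j \<and> B \<inter> fs ! j = fs ! j - {u}"
        unfolding cnd_def s[OF j] .
      have "fs ! i \<in> {fs ! i | i. i < j}" using i by blast
      then obtain B u where B: "B \<in> {fs ! i | i. i < j}" and u: "u \<in> fs ! j"
          "fs ! i \<inter> fs ! j \<subseteq> B \<inter> fs ! j" "B \<inter> fs ! j = fs ! j - {u}"
        using C by (meson bspec)
      from B obtain l where l: "l < j" "B = fs ! l" by blast
      show "\<exists>l < j. \<exists>v \<in> fs ! j.
        fs ! i \<inter> fs ! j \<subseteq> fs ! l \<inter> fs ! j \<and> fs ! l \<inter> fs ! j = fs ! j - {v}"
        using l u by blast
    qed
  qed
qed

lemma VD_shellable:
  "vertex_decomposable K \<Longrightarrow> finite K \<Longrightarrow> dclosed K \<Longrightarrow> shellable K"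
proof (induction rule: vertex_decomposable.induct)
  case (simplex K)
  then obtain F where K: "K = Pow F" by (auto simp: is_simplex_def)
  have "facets K = {F}" unfolding K facets_def by auto
  then show ?case unfolding shellable_def by (intro exI[of _ "[F]"]) auto
next
  case (shed v K)
  have fd: "finite (deletion K v)" "finite (link K v)" using shed.prems
    by (auto simp: deletion_def link_def)
  have dd: "dclosed (deletion K v)" "dclosed (link K v)" using shed.prems(2)
    unfolding dclosed_def deletion_def link_def by (auto, meson insert_mono)
  obtain fs1 where f1: "distinct fs1" "set fs1 = facets (deletion K v)"
    "\<forall>j < length fs1. cnd (take j fs1) (fs1 ! j)"
    using shed.IH(1)[OF fd(1) dd(1)] unfolding shellable_def shell_iff by blast
  obtain fs2 where f2: "distinct fs2" "set fs2 = facets (link K v)"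
    "\<forall>j < length fs2. cnd (take j fs2) (fs2 ! j)"
    using shed.IH(2)[OF fd(2) dd(2)] unfolding shellable_def shell_iff by blast
  have v1: "\<And>A. A \<in> set fs1 \<Longrightarrow> v \<notin> A" using f1 by (auto simp: facets_def deletion_def)
  have v2: "\<And>A. A \<in> set fs2 \<Longrightarrow> v \<notin> A" using f2 by (auto simp: facets_def link_def)
  define fs where "fs = fs1 @ map (insert v) fs2"
  have injv: "inj_on (insert v) (set fs2)"
    unfolding inj_on_def using v2 by (metis insert_ident)
  have disj: "set fs1 \<inter> set (map (insert v) fs2) = {}" using v1 by auto
  have dist: "distinct fs" unfolding fs_def using f1 f2 disj injv
    by (simp add: distinct_map)
  have sfs: "set fs = facets K"
    unfolding fs_def using facets_decomp[OF shed.prems(2) shed.hyps(4)] f1 f2 by auto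
  have cn: "cnd (take j fs) (fs ! j)" if j: "j < length fs" for j
  proof (cases "j < length fs1")
    case True
    then show ?thesis using f1(3) by (simp add: fs_def nth_append)
  next
    case False
    define k where "k = j - length fs1"
    have k: "k < length fs2" using j False by (simp add: fs_def k_def)
    define G where "G = fs2 ! k"
    have tk: "take j fs = fs1 @ map (insert v) (take k fs2)"
      using False by (simp add: fs_def k_def take_map)
    have nj: "fs ! j = insert v G" using False k by (simp add: fs_def k_def nth_append G_def)
    have Gs: "G \<in> set fs2" using k by (simp add: G_def)
    have vG: "v \<notin> G" using v2 Gs by simp
    have Gd: "G \<in> deletion K v" using Gs f2 by (auto simp: facets_def link_def deletion_def)
    obtain B where B: "B \<in> facets (deletion K v)" "G \<subseteq> B"
      using exists_facet[OF fd(1) Gd] by blast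
    have cG: "cnd (take k fs2) G" using f2(3) k by (simp add: G_def)
    show ?thesis unfolding tk nj cnd_def
    proof
      fix A assume A: "A \<in> set (fs1 @ map (insert v) (take k fs2))"
      show "\<exists>B\<in>set (fs1 @ map (insert v) (take k fs2)). \<exists>u\<in>insert v G.
          A \<inter> insert v G \<subseteq> B \<inter> insert v G \<and> B \<inter> insert v G = insert v G - {u}"
      proof (cases "A \<in> set fs1")
        case True
        have vB: "v \<notin> B" using B f1 v1 by auto
        have "A \<inter> insert v G \<subseteq> B \<inter> insert v G" using v1[OF True] B by auto
        moreover have "B \<inter> insert v G = insert v G - {v}" using vB vG B by auto
        ultimately show ?thesis using B f1 by (intro bexI[of _ B]) auto
      next
        case False
        then obtain A' where A': "A' \<in> set (take k fs2)" "A = insert v A'" using A by auto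
        obtain B' u where B': "B' \<in> set (take k fs2)" "u \<in> G" "A' \<inter> G \<subseteq> B' \<inter> G"
          "B' \<inter> G = G - {u}" using cG A'(1) unfolding cnd_def by blast
        have uv: "u \<noteq> v" using B' vG by auto
        have "A \<inter> insert v G \<subseteq> insert v B' \<inter> insert v G" using A' B' by auto
        moreover have "insert v B' \<inter> insert v G = insert v G - {u}" using B' uv by auto
        moreover have "insert v B' \<in> set (fs1 @ map (insert v) (take k fs2))" using B' by auto
        ultimately show ?thesis using B' by blast
      qed
    qed
  qed
  show ?case unfolding shellable_def shell_iff using dist sfs cn by blast
qed

theorem mainTheorem8:
  fixes V :: "'v set" and E :: "('v \<times> 'v) set"
  assumes "digraph V E" and "essentially_tree V E"
  shows "vertex_decomposable (tree_complex E) \<and> shellable (tree_complex E)"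
proof -
  have nc: "\<not> ug_has_cycle V E" using assms(2) by (simp add: essentially_tree_def)
  have finE: "finite E" using assms(1) unfolding digraph_def
    by (meson finite_SigmaI finite_subset)
  have tc: "tree_complex E = Ind E" by (rule tc_Ind[OF assms(1) nc])
  have vd: "vertex_decomposable (Ind E)" by (rule VD_Ind[OF assms(1) nc finE subset_refl])
  have "Ind E \<subseteq> Pow E" by (auto simp: Ind_def)
  then have "finite (Ind E)" using finite_subset finE by blast
  moreover have "dclosed (Ind E)" by (auto simp: dclosed_def Ind_def)
  ultimately have "shellable (Ind E)" using VD_shellable vd by blast
  then show ?thesis using vd tc by simp
qed

end
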